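(* Let $\mathfrak g\xrightarrow{\mu}\mathfrak h$ be a crossed module of Lie algebras with action $\mathcal L$. Let $(\omega,\varphi)$ and $(\omega',\varphi')$ be pairs in $\bigwedge^2\mathfrak h^*\oplus(\mathfrak g\oplus\mathfrak h)^*$, each satisfying the cocycle conditions (1)–(3) below. Suppose there is $\psi\in\mathfrak h^*$ with $\omega(y_0,y_1)-\omega'(y_0,y_1)=-\psi([y_0,y_1])$ for all $y_0,y_1\in\mathfrak h$ and $\varphi(x,y)-\varphi'(x,y)=\psi(\mu(x))$ for all $(x,y)\in\mathfrak g\oplus\mathfrak h$. Then the induced extensions are isomorphic: the map $\mathfrak h\oplus^\omega\mathbb R\to\mathfrak h\oplus^{\omega'}\mathbb R$, $(y,\lambda)\mapsto(y,\lambda-\psi(y))$, together with the identity of $\mathfrak g$, is an isomorphism of crossed modules from $\mathfrak g\xrightarrow{\mu_\varphi}\mathfrak h\oplus^\omega\mathbb R$ to $\mathfrak g\xrightarrow{\mu_{\varphi'}}\mathfrak h\oplus^{\omega'}\mathbb R$ compatible with the inclusions of $\mathbb R$ and the projections to $\mathfrak h$.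
   Context: A crossed module of Lie algebras: Lie algebras $\mathfrak g,\mathfrak h$, Lie homomorphism $\mu:\mathfrak g\to\mathfrak h$, Lie homomorphism $\mathcal L:\mathfrak h\to\mathrm{Der}(\mathfrak g)$ with $\mu(\mathcal L_yx)=[y,\mu(x)]$, $\mathcal L_{\mu(x_0)}x_1=[x_0,x_1]$. $[(x_0,y_0),(x_1,y_1)]_{\mathcal L}=([x_0,x_1]+\mathcal L_{y_0}x_1-\mathcal L_{y_1}x_0,[y_0,y_1])$. Cocycle conditions for $(\omega,\varphi)$: (1) $-\omega([y_0,y_1],y_2)+\omega([y_0,y_2],y_1)-\omega([y_1,y_2],y_0)=0$; (2) $\varphi(x_2,y)-\varphi(x_1+x_2,y)+\varphi(x_1,y+\mu(x_2))=0$; (3) $\omega(y_0,y_1)-\omega(y_0+\mu(x_0),y_1+\mu(x_1))=\varphi([(x_0,y_0),(x_1,y_1)]_{\mathcal L})$. $\mathfrak h\oplus^\omega\mathbb R$ is $\mathfrak h\oplus\mathbb R$ with bracket $[(y_0,\lambda_0),(y_1,\lambda_1)]_\omega=([y_0,y_1],-\omega(y_0,y_1))$. The induced extension of $(\omega,\varphi)$ is the crossed module $\mu_\varphi:\mathfrak g\to\mathfrak h\oplus^\omega\mathbb R$, $x\mapsto(\mu(x),\varphi(x,0))$, with action $\mathcal L_{(y,\lambda)}x=\mathcal L_yx$, sitting in the short exact sequence of crossed modules $0\to(0\to\mathbb R)\to(\mathfrak g\xrightarrow{\mu_\varphi}\mathfrak h\oplus^\omega\mathbb R)\to(\mathfrak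 g\xrightarrow{\mu}\mathfrak h)\to0$ (identity on $\mathfrak g$, inclusion $\lambda\mapsto(0,\lambda)$, projection $(y,\lambda)\mapsto y$). An isomorphism of crossed modules is a pair of Lie algebra isomorphisms commuting with the structure maps and intertwining the actions. *)

theory Defs
  imports "HOL-Analysis.Analysis"
begin

definition bilinear_map :: "('a::real_vector \<Rightarrow> 'b::real_vector \<Rightarrow> 'c::real_vector) \<Rightarrow> bool" where
  "bilinear_map b \<longleftrightarrow> (\<forall>x. linear (b x)) \<and> (\<forall>y. linear (\<lambda>x. b x y))"

definition lie_algebra :: "('a::real_vector \<Rightarrow> 'a \<Rightarrow> 'a) \<Rightarrow> bool" where
  "lie_algebra br \<longleftrightarrow> bilinear_map br \<and> (\<forall>x. br x x = 0) \<and>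
     (\<forall>x y z. br x (br y z) + br y (br z x) + br z (br x y) = 0)"

definition lie_hom :: "('a::real_vector \<Rightarrow> 'a \<Rightarrow> 'a) \<Rightarrow> ('b::real_vector \<Rightarrow> 'b \<Rightarrow> 'b) \<Rightarrow> ('a \<Rightarrow> 'b) \<Rightarrow> bool" where
  "lie_hom brA brB f \<longleftrightarrow> linear f \<and> (\<forall>x y. f (brA x y) = brB (f x) (f y))"

definition lie_iso :: "('a::real_vector \<Rightarrow> 'a \<Rightarrow> 'a) \<Rightarrow> ('b::real_vector \<Rightarrow> 'b \<Rightarrow> 'b) \<Rightarrow> ('a \<Rightarrow> 'b) \<Rightarrow> bool" where
  "lie_iso brA brB f \<longleftrightarrow> lie_hom brA brB f \<and> bij f"

definition derivation :: "('a::real_vector \<Rightarrow> 'a \<Rightarrow> 'a) \<Rightarrow> ('a \<Rightarrow> 'a) \<Rightarrow> bool" where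
  "derivation br D \<longleftrightarrow> linear D \<and> (\<forall>x y. D (br x y) = br (D x) y + br x (D y))"

definition crossed_module ::
  "('g::real_vector \<Rightarrow> 'g \<Rightarrow> 'g) \<Rightarrow> ('h::real_vector \<Rightarrow> 'h \<Rightarrow> 'h) \<Rightarrow> ('g \<Rightarrow> 'h) \<Rightarrow> ('h \<Rightarrow> 'g \<Rightarrow> 'g) \<Rightarrow> bool" where
  "crossed_module brg brh \<mu> L \<longleftrightarrow>
     lie_algebra brg \<and> lie_algebra brh \<and> lie_hom brg brh \<mu> \<and>
     (\<forall>y. derivation brg (L y)) \<and> (\<forall>x. linear (\<lambda>y. L y x)) \<and>
     (\<forall>y0 y1 x. L (brh y0 y1) x = L y0 (L y1 x) - L y1 (L y0 x)) \<and>
     (\<forall>y x. \<mu> (L y x) = brh y (\<mu> x)) \<and>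
     (\<forall>x0 x1. L (\<mu> x0) x1 = brg x0 x1)"

definition crossed_module_iso ::
  "('g::real_vector \<Rightarrow> 'g \<Rightarrow> 'g) \<Rightarrow> ('h::real_vector \<Rightarrow> 'h \<Rightarrow> 'h) \<Rightarrow> ('g \<Rightarrow> 'h) \<Rightarrow> ('h \<Rightarrow> 'g \<Rightarrow> 'g) \<Rightarrow>
   ('g2::real_vector \<Rightarrow> 'g2 \<Rightarrow> 'g2) \<Rightarrow> ('h2::real_vector \<Rightarrow> 'h2 \<Rightarrow> 'h2) \<Rightarrow> ('g2 \<Rightarrow> 'h2) \<Rightarrow> ('h2 \<Rightarrow> 'g2 \<Rightarrow> 'g2) \<Rightarrow>
   ('g \<Rightarrow> 'g2) \<Rightarrow> ('h \<Rightarrow> 'h2) \<Rightarrow> bool" where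
  "crossed_module_iso brg brh \<mu> L brg' brh' \<mu>' L' f F \<longleftrightarrow>
     lie_iso brg brg' f \<and> lie_iso brh brh' F \<and>
     (\<forall>x. \<mu>' (f x) = F (\<mu> x)) \<and>
     (\<forall>y x. f (L y x) = L' (F y) (f x))"

definition semidirect_bracket ::
  "('g::real_vector \<Rightarrow> 'g \<Rightarrow> 'g) \<Rightarrow> ('h::real_vector \<Rightarrow> 'h \<Rightarrow> 'h) \<Rightarrow> ('h \<Rightarrow> 'g \<Rightarrow> 'g) \<Rightarrow>
   'g \<times> 'h \<Rightarrow> 'g \<times> 'h \<Rightarrow> 'g \<times> 'h" where
  "semidirect_bracket brg brh L p q =
     (brg (fst p) (fst q) + L (snd p) (fst q) - L (snd q) (fst p), brh (snd p) (snd q))"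

definition cocycle ::
  "('g::real_vector \<Rightarrow> 'g \<Rightarrow> 'g) \<Rightarrow> ('h::real_vector \<Rightarrow> 'h \<Rightarrow> 'h) \<Rightarrow> ('g \<Rightarrow> 'h) \<Rightarrow> ('h \<Rightarrow> 'g \<Rightarrow> 'g) \<Rightarrow>
   ('h \<Rightarrow> 'h \<Rightarrow> real) \<Rightarrow> ('g \<times> 'h \<Rightarrow> real) \<Rightarrow> bool" where
  "cocycle brg brh \<mu> L \<omega> \<phi> \<longleftrightarrow>
     bilinear_map \<omega> \<and> (\<forall>y. \<omega> y y = 0) \<and> linear \<phi> \<and>
     (\<forall>y0 y1 y2. - \<omega> (brh y0 y1) y2 + \<omega> (brh y0 y2) y1 - \<omega> (brh y1 y2) y0 = 0) \<and>
     (\<forall>x1 x2 y. \<phi> (x2, y) - \<phi> (x1 + x2, y) + \<phi> (x1, y + \<mu> x2) = 0) \<and>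
     (\<forall>x0 y0 x1 y1. \<omega> y0 y1 - \<omega> (y0 + \<mu> x0) (y1 + \<mu> x1) =
        \<phi> (semidirect_bracket brg brh L (x0, y0) (x1, y1)))"

definition omega_bracket :: "('h::real_vector \<Rightarrow> 'h \<Rightarrow> 'h) \<Rightarrow> ('h \<Rightarrow> 'h \<Rightarrow> real) \<Rightarrow>
   'h \<times> real \<Rightarrow> 'h \<times> real \<Rightarrow> 'h \<times> real" where
  "omega_bracket brh \<omega> p q = (brh (fst p) (fst q), - \<omega> (fst p) (fst q))"

definition ext_mu :: "('g::real_vector \<Rightarrow> 'h::real_vector) \<Rightarrow> ('g \<times> 'h \<Rightarrow> real) \<Rightarrow> 'g \<Rightarrow> 'h \<times> real" where
  "ext_mu \<mu> \<phi> x = (\<mu> x, \<phi> (x, 0))"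

definition ext_action :: "('h \<Rightarrow> 'g \<Rightarrow> 'g) \<Rightarrow> 'h \<times> real \<Rightarrow> 'g \<Rightarrow> 'g" where
  "ext_action L p x = L (fst p) x"

end

theory Submission
  imports Defs
begin

lemma bil_facts:
  assumes "bilinear_map b"
  shows "b (x + x') y = b x y + b x' y" "b x (y + y') = b x y + b x y'"
    "b (c *\<^sub>R x) y = c *\<^sub>R b x y" "b x (c *\<^sub>R y) = c *\<^sub>R b x y"
    "b 0 y = 0" "b x 0 = 0"
proof -
  have l1: "linear (b x)" "linear (b x')" "linear (\<lambda>x. b x y)" "linear (b 0)" "linear (\<lambda>x. b x 0)"
    using assms unfolding bilinear_map_def by auto
  show "b (x + x') y = b x y + b x' y" using linear_add[OF l1(3), of x x'] by simp
  show "b x (y + y') = b x y + b x y'" using linear_add[OF l1(1)] by simp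
  show "b (c *\<^sub>R x) y = c *\<^sub>R b x y" using linear_scale[OF l1(3), of c x] by simp
  show "b x (c *\<^sub>R y) = c *\<^sub>R b x y" using linear_scale[OF l1(1)] by simp
  show "b 0 y = 0" using linear_0[OF l1(3)] by simp
  show "b x 0 = 0" using linear_0[OF l1(1)] by simp
qed

lemma alt_antisym:
  assumes "bilinear_map b" "\<forall>y. b y y = 0"
  shows "b x y = - b y x"
proof -
  have "b (x + y) (x + y) = 0" using assms by auto
  then have "b x x + b x y + (b y x + b y y) = 0" using bil_facts[OF assms(1)]
    by (simp add: algebra_simps)
  then show ?thesis using assms(2) by (simp add: eq_neg_iff_add_eq_0)
qed

lemma omega_lie:
  assumes la: "lie_algebra brh" and bw: "bilinear_map \<omega>" and aw: "\<forall>y. \<omega> y y = 0"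
    and c1: "\<forall>y0 y1 y2. - \<omega> (brh y0 y1) y2 + \<omega> (brh y0 y2) y1 - \<omega> (brh y1 y2) y0 = 0"
  shows "lie_algebra (omega_bracket brh \<omega>)"
proof -
  have bh: "bilinear_map brh" using la by (simp add: lie_algebra_def)
  note B = bil_facts[OF bh] and W = bil_facts[OF bw]
  have bil: "bilinear_map (omega_bracket brh \<omega>)"
    unfolding bilinear_map_def omega_bracket_def
    by (auto intro!: linearI simp: B W prod_eq_iff)
  have jac: "omega_bracket brh \<omega> x (omega_bracket brh \<omega> y z) + omega_bracket brh \<omega> y (omega_bracket brh \<omega> z x)
      + omega_bracket brh \<omega> z (omega_bracket brh \<omega> x y) = 0" for x y z
  proof -
    have j1: "brh (fst x) (brh (fst y) (fst z)) + brh (fst y) (brh (fst z) (fst x)) + brh (fst z) (brh (fst x) (fst y)) = 0"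
      using la by (simp add: lie_algebra_def)
    have a1: "\<omega> (fst x) (brh (fst y) (fst z)) = - \<omega> (brh (fst y) (fst z)) (fst x)"
      "\<omega> (fst y) (brh (fst z) (fst x)) = - \<omega> (brh (fst z) (fst x)) (fst y)"
      "\<omega> (fst z) (brh (fst x) (fst y)) = - \<omega> (brh (fst x) (fst y)) (fst z)"
      "brh (fst z) (fst x) = - brh (fst x) (fst z)"
      using alt_antisym[OF bw aw] la unfolding lie_algebra_def by (blast intro: alt_antisym[OF bh])+
    have "\<omega> (brh (fst x) (fst z)) (fst y) = - \<omega> (- brh (fst x) (fst z)) (fst y)"
      using W(3)[of "-1"] by simp
    moreover have "- \<omega> (brh (fst x) (fst y)) (fst z) + \<omega> (brh (fst x) (fst z)) (fst y) - \<omega> (brh (fst y) (fst z)) (fst x) = 0"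
      using c1 by blast
    ultimately have s: "- \<omega> (fst x) (brh (fst y) (fst z)) - \<omega> (fst y) (brh (fst z) (fst x))
       - \<omega> (fst z) (brh (fst x) (fst y)) = 0"
      using a1 by (simp only:)
    show ?thesis using j1 s unfolding omega_bracket_def
      by (simp add: prod_eq_iff)
  qed
  show ?thesis unfolding lie_algebra_def using bil jac aw la
    by (auto simp: omega_bracket_def lie_algebra_def zero_prod_def)
qed

lemma ext_action_fun: "ext_action L p = L (fst p)"
  by (rule ext) (simp add: ext_action_def)

lemma ext_cm:
  assumes cm: "crossed_module brg brh \<mu> L" and c: "cocycle brg brh \<mu> L \<omega> \<phi>"
  shows "crossed_module brg (omega_bracket brh \<omega>) (ext_mu \<mu> \<phi>) (ext_action L)"
proof -
  have lg: "lie_algebra brg" and lh: "lie_algebra brh" and hm: "lie_hom brg brh \<mu>"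
    and der: "\<forall>y. derivation brg (L y)" and lx: "\<forall>x. linear (\<lambda>y. L y x)"
    and act: "\<forall>y0 y1 x. L (brh y0 y1) x = L y0 (L y1 x) - L y1 (L y0 x)"
    and eq: "\<forall>y x. \<mu> (L y x) = brh y (\<mu> x)" and pf: "\<forall>x0 x1. L (\<mu> x0) x1 = brg x0 x1"
    using cm by (auto simp: crossed_module_def)
  have bw: "bilinear_map \<omega>" and aw: "\<forall>y. \<omega> y y = 0" and lp: "linear \<phi>"
    and c1: "\<forall>y0 y1 y2. - \<omega> (brh y0 y1) y2 + \<omega> (brh y0 y2) y1 - \<omega> (brh y1 y2) y0 = 0"
    and c3: "\<forall>x0 y0 x1 y1. \<omega> y0 y1 - \<omega> (y0 + \<mu> x0) (y1 + \<mu> x1) =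
        \<phi> (semidirect_bracket brg brh L (x0, y0) (x1, y1))"
    using c by (auto simp: cocycle_def)
  have bh: "bilinear_map brh" and bg: "bilinear_map brg" using lh lg by (auto simp: lie_algebra_def)
  note B = bil_facts[OF bh] and W = bil_facts[OF bw] and G = bil_facts[OF bg]
  have L0: "L 0 x = 0" for x using lx linear_0 by fastforce
  have Lx0: "L y 0 = 0" for y using der linear_0 by (fastforce simp: derivation_def)
  have lmu: "linear \<mu>" using hm by (simp add: lie_hom_def)
  have lin_em: "linear (ext_mu \<mu> \<phi>)"
    unfolding ext_mu_def
  proof (intro linearI)
    fix a b
    show "(\<mu> (a + b), \<phi> (a + b, 0)) = (\<mu> a, \<phi> (a, 0)) + (\<mu> b, \<phi> (b, 0))"
      using linear_add[OF lmu, of a b] linear_add[OF lp, of "(a,0)" "(b,0)"] by simp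
  next
    fix r b
    show "(\<mu> (r *\<^sub>R b), \<phi> (r *\<^sub>R b, 0)) = r *\<^sub>R (\<mu> b, \<phi> (b, 0))"
      using linear_scale[OF lmu, of r b] linear_scale[OF lp, of r "(b,0)"] by simp
  qed
  have h1: "\<phi> (brg x0 x1, 0) = - \<omega> (\<mu> x0) (\<mu> x1)" for x0 x1
    using spec[OF spec[OF spec[OF spec[OF c3, of x0], of 0], of x1], of 0] by (simp add: semidirect_bracket_def L0 B W)
  have h2: "\<phi> (L y x, 0) = - \<omega> y (\<mu> x)" for y x
    using spec[OF spec[OF spec[OF spec[OF c3, of 0], of y], of x], of 0] by (simp add: linear_0[OF lmu] semidirect_bracket_def L0 Lx0 B W G)
  have hom: "lie_hom brg (omega_bracket brh \<omega>) (ext_mu \<mu> \<phi>)"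
    using lin_em hm h1 by (simp add: lie_hom_def ext_mu_def omega_bracket_def)
  have linact: "linear (\<lambda>p. ext_action L p x)" for x
  proof -
    have l: "linear (\<lambda>y. L y x)" using lx by blast
    show ?thesis unfolding ext_action_def
      by (intro linearI) (simp_all add: linear_add[OF l, simplified] linear_scale[OF l, simplified])
  qed
  show ?thesis unfolding crossed_module_def
    using omega_lie[OF lh bw aw c1] lg hom der linact act eq pf h2
    by (auto simp: ext_action_fun omega_bracket_def ext_mu_def)
qed

theorem mainTheorem16:
  fixes brg :: "'g::real_vector \<Rightarrow> 'g \<Rightarrow> 'g" and brh :: "'h::real_vector \<Rightarrow> 'h \<Rightarrow> 'h"
    and \<mu> :: "'g \<Rightarrow> 'h" and L :: "'h \<Rightarrow> 'g \<Rightarrow> 'g"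
    and \<omega> \<omega>' :: "'h \<Rightarrow> 'h \<Rightarrow> real" and \<phi> \<phi>' :: "'g \<times> 'h \<Rightarrow> real" and \<psi> :: "'h \<Rightarrow> real"
  assumes cm: "crossed_module brg brh \<mu> L"
    and c1: "cocycle brg brh \<mu> L \<omega> \<phi>"
    and c2: "cocycle brg brh \<mu> L \<omega>' \<phi>'"
    and \<psi>_lin: "linear \<psi>"
    and h\<omega>: "\<And>y0 y1. \<omega> y0 y1 - \<omega>' y0 y1 = - \<psi> (brh y0 y1)"
    and h\<phi>: "\<And>x y. \<phi> (x, y) - \<phi>' (x, y) = \<psi> (\<mu> x)"
  shows "crossed_module brg (omega_bracket brh \<omega>) (ext_mu \<mu> \<phi>) (ext_action L)
       \<and> crossed_module brg (omega_bracket brh \<omega>') (ext_mu \<mu> \<phi>') (ext_action L)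
       \<and> crossed_module_iso brg (omega_bracket brh \<omega>) (ext_mu \<mu> \<phi>) (ext_action L)
           brg (omega_bracket brh \<omega>') (ext_mu \<mu> \<phi>') (ext_action L)
           id (\<lambda>(y, t). (y, t - \<psi> y))
       \<and> (\<forall>t. (\<lambda>(y, t). (y, t - \<psi> y)) (0, t) = (0, t))
       \<and> (\<forall>y t. fst ((\<lambda>(y, t). (y, t - \<psi> y)) (y, t)) = y)"
proof -
  define F :: "'h \<times> real \<Rightarrow> 'h \<times> real" where "F = (\<lambda>(y, t). (y, t - \<psi> y))"
  have F: "F p = (fst p, snd p - \<psi> (fst p))" for p by (cases p) (simp add: F_def)
  have linF: "linear F"
    by (intro linearI) (auto simp: F linear_add[OF \<psi>_lin] linear_scale[OF \<psi>_lin] algebra_simps)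
  have bijF: "bij F"
  proof (rule bij_betw_byWitness[where f' = "\<lambda>p. (fst p, snd p + \<psi> (fst p))"])
  qed (auto simp: F)
  have homF: "lie_hom (omega_bracket brh \<omega>) (omega_bracket brh \<omega>') F"
    unfolding lie_hom_def using linF h\<omega>
    by (auto simp: F omega_bracket_def prod_eq_iff) (smt (verit) h\<omega>)
  have lg: "lie_algebra brg" using cm by (simp add: crossed_module_def)
  have idiso: "lie_iso brg brg id"
    by (auto simp: lie_iso_def lie_hom_def intro!: linearI)
  have phi0: "\<phi>' (x, 0) = \<phi> (x, 0) - \<psi> (\<mu> x)" for x using h\<phi>[of x 0] by simp
  have iso: "crossed_module_iso brg (omega_bracket brh \<omega>) (ext_mu \<mu> \<phi>) (ext_action L)
           brg (omega_bracket brh \<omega>') (ext_mu \<mu> \<phi>') (ext_action L) id F"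
    unfolding crossed_module_iso_def lie_iso_def using idiso homF bijF
    by (auto simp: lie_iso_def ext_mu_def F phi0 ext_action_def)
  show ?thesis using ext_cm[OF cm c1] ext_cm[OF cm c2] iso linear_0[OF \<psi>_lin]
    by (simp add: F_def)
qed

end
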